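(* Let $g(x)=\sum_{j=1}^p g_j(x_j)$ with each $g_j:\mathbb{R}\to\mathbb{R}\cup\{+\infty\}$ proper, closed and convex, and let $x^\star\in\operatorname{dom}(g)$. If for every $j\in\mathcal{S}_{x^\star}$, $g_j$ is $\mathcal{C}^2$ on a neighbourhood of $x^\star_j$, then $g$ is partly smooth at $x^\star$ relative to the affine set $x^\star+T_{x^\star}$.
   Context: Generalized support: $\mathcal{S}_x=\{j\in[p]:\partial g_j(x_j)\text{ is a singleton}\}$. Model subspace: $T_x=\{u\in\mathbb{R}^p:u_j=0\ \forall j\notin\mathcal{S}_x\}$. A proper closed convex $g$ is partly smooth at $x$ relative to a set $\mathcal{M}$ if there is a neighbourhood $\mathcal{U}$ of $x$ such that: (smoothness) $\mathcal{M}\cap\mathcal{U}$ is a $\mathcal{C}^2$ manifold and $g$ restricted to $\mathcal{M}\cap\mathcal{U}$ is $\mathcal{C}^2$; (sharpness) the tangent space of $\mathcal{M}$ at $x$ equals $\operatorname{Lin}(\partial g(x))^\perp$, where $\operatorname{Lin}(\partial g(x))=\operatorname{aff}(\partial g(x))-e_x$ with $e_x$ the minimal-norm element of $\operatorname{aff}(\partial g(x))$; (continuity) the set-valued map $\partial g$ is continuous at $x$ relative to $\mathcal{M}$. *)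

theory Defs
  imports "HOL-Analysis.Analysis"
begin

text \<open>Functions with values in R \<union> {+\<infinity>} are modelled as functions into ereal that never take -\<infinity>.\<close>

definition epigraph1 :: "(real \<Rightarrow> ereal) \<Rightarrow> (real \<times> real) set" where
  "epigraph1 f = {(t, r). f t \<le> ereal r}"

definition proper_fun :: "('a \<Rightarrow> ereal) \<Rightarrow> bool" where
  "proper_fun f \<longleftrightarrow> (\<forall>x. f x \<noteq> -\<infinity>) \<and> (\<exists>x. f x \<noteq> \<infinity>)"

definition closed_fun1 :: "(real \<Rightarrow> ereal) \<Rightarrow> bool" where
  "closed_fun1 f \<longleftrightarrow> closed (epigraph1 f)"

definition convex_fun1 :: "(real \<Rightarrow> ereal) \<Rightarrow> bool" where
  "convex_fun1 f \<longleftrightarrow> convex (epigraph1 f)"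

definition edom :: "('a \<Rightarrow> ereal) \<Rightarrow> 'a set" where
  "edom f = {x. f x < \<infinity>}"

definition subdiff :: "('a::real_inner \<Rightarrow> ereal) \<Rightarrow> 'a \<Rightarrow> 'a set" where
  "subdiff f x = {v. f x < \<infinity> \<and> (\<forall>y. f x + ereal (v \<bullet> (y - x)) \<le> f y)}"

definition sep_sum :: "('n::finite \<Rightarrow> real \<Rightarrow> ereal) \<Rightarrow> real^'n \<Rightarrow> ereal" where
  "sep_sum G x = (\<Sum>j\<in>UNIV. G j (x $ j))"

definition gen_support :: "('n::finite \<Rightarrow> real \<Rightarrow> ereal) \<Rightarrow> real^'n \<Rightarrow> 'n set" where
  "gen_support G x = {j. \<exists>v. subdiff (G j) (x $ j) = {v}}"

definition model_subspace :: "('n::finite \<Rightarrow> real \<Rightarrow> ereal) \<Rightarrow> real^'n \<Rightarrow> (real^'n) set" where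
  "model_subspace G x = {u. \<forall>j. j \<notin> gen_support G x \<longrightarrow> u $ j = 0}"

definition C2_on :: "'a::real_normed_vector set \<Rightarrow> ('a \<Rightarrow> 'b::real_normed_vector) \<Rightarrow> bool" where
  "C2_on S f \<longleftrightarrow> (\<exists>f' f''.
      (\<forall>x\<in>S. (f has_derivative blinfun_apply (f' x)) (at x)) \<and>
      (\<forall>x\<in>S. (f' has_derivative blinfun_apply (f'' x)) (at x)) \<and>
      continuous_on S f'')"

definition C2_near :: "('a::real_normed_vector \<Rightarrow> ereal) \<Rightarrow> 'a \<Rightarrow> bool" where
  "C2_near f x \<longleftrightarrow> (\<exists>V h. open V \<and> x \<in> V \<and> C2_on V h \<and> (\<forall>z\<in>V. f z = ereal (h z)))"

definition C2_manifold :: "('a::euclidean_space) set \<Rightarrow> bool" where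
  "C2_manifold N \<longleftrightarrow> (\<forall>y\<in>N. \<exists>V W (\<phi>::'a \<Rightarrow> 'a) \<psi> L.
      open V \<and> y \<in> V \<and> open W \<and> subspace L \<and> C2_on V \<phi> \<and> C2_on W \<psi> \<and>
      \<phi> ` V = W \<and> (\<forall>z\<in>V. \<psi> (\<phi> z) = z) \<and> \<phi> ` (N \<inter> V) = L \<inter> W)"

definition C2_restricted :: "('a::real_normed_vector \<Rightarrow> ereal) \<Rightarrow> 'a set \<Rightarrow> bool" where
  "C2_restricted g N \<longleftrightarrow> (\<forall>y\<in>N. \<exists>V h. open V \<and> y \<in> V \<and> C2_on V h \<and>
      (\<forall>z\<in>N \<inter> V. g z = ereal (h z)))"

definition tangent_space :: "('a::real_normed_vector) set \<Rightarrow> 'a \<Rightarrow> 'a set" where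
  "tangent_space M x = {v. \<exists>(\<gamma>::real \<Rightarrow> 'a) e. e > 0 \<and> \<gamma> 0 = x \<and>
      (\<forall>t\<in>{-e<..<e}. \<gamma> t \<in> M) \<and> (\<gamma> has_vector_derivative v) (at 0)}"

definition min_norm_elem :: "'a::real_normed_vector set \<Rightarrow> 'a" where
  "min_norm_elem A = (THE e. e \<in> A \<and> (\<forall>a\<in>A. norm e \<le> norm a))"

definition Lin :: "'a::real_normed_vector set \<Rightarrow> 'a set" where
  "Lin C = (\<lambda>a. a - min_norm_elem (affine hull C)) ` (affine hull C)"

text \<open>Painleve-Kuratowski continuity of a set-valued map F at x relative to M.\<close>
definition pk_continuous_rel :: "('a::metric_space \<Rightarrow> 'b::metric_space set) \<Rightarrow> 'a \<Rightarrow> 'a set \<Rightarrow> bool" where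
  "pk_continuous_rel F x M \<longleftrightarrow>
     (\<forall>ys vs v. (\<forall>k. ys k \<in> M) \<and> ys \<longlonglongrightarrow> x \<and> (\<forall>k. vs k \<in> F (ys k)) \<and> vs \<longlonglongrightarrow> v
         \<longrightarrow> v \<in> F x) \<and>
     (\<forall>v\<in>F x. \<forall>ys. (\<forall>k. ys k \<in> M) \<and> ys \<longlonglongrightarrow> x \<longrightarrow>
         (\<exists>vs. (\<forall>\<^sub>F k in sequentially. vs k \<in> F (ys k)) \<and> vs \<longlonglongrightarrow> v))"

definition partly_smooth :: "('a::euclidean_space \<Rightarrow> ereal) \<Rightarrow> 'a \<Rightarrow> 'a set \<Rightarrow> bool" where
  "partly_smooth g x M \<longleftrightarrow>
     (\<exists>U. open U \<and> x \<in> U \<and> C2_manifold (M \<inter> U) \<and> C2_restricted g (M \<inter> U)) \<and>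
     tangent_space M x = orthogonal_comp (Lin (subdiff g x)) \<and>
     pk_continuous_rel (subdiff g) x M"

end

theory Submission
  imports Defs
begin


lemma C2_on_subset: "C2_on S f \<Longrightarrow> T \<subseteq> S \<Longrightarrow> C2_on T f"
  unfolding C2_on_def by (meson continuous_on_subset subsetD)

lemma C2_on_const: "C2_on S (\<lambda>x. c)"
  unfolding C2_on_def
  by (rule exI[of _ "\<lambda>_. 0"], rule exI[of _ "\<lambda>_. 0"]) (auto intro: has_derivative_eq_rhs[OF has_derivative_const] simp: fun_eq_iff)

lemma C2_on_add: "C2_on S f \<Longrightarrow> C2_on S g \<Longrightarrow> C2_on S (\<lambda>x. f x + g x)"
proof -
  assume "C2_on S f" "C2_on S g"
  then obtain f' f'' g' g'' where
    f: "\<forall>x\<in>S. (f has_derivative blinfun_apply (f' x)) (at x)" "\<forall>x\<in>S. (f' has_derivative blinfun_apply (f'' x)) (at x)" "continuous_on S f''"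
    and g: "\<forall>x\<in>S. (g has_derivative blinfun_apply (g' x)) (at x)" "\<forall>x\<in>S. (g' has_derivative blinfun_apply (g'' x)) (at x)" "continuous_on S g''"
    unfolding C2_on_def by metis
  show ?thesis unfolding C2_on_def
    apply (rule exI[of _ "\<lambda>x. f' x + g' x"], rule exI[of _ "\<lambda>x. f'' x + g'' x"])
    using f g by (auto intro!: has_derivative_eq_rhs[OF has_derivative_add] continuous_on_add simp: fun_eq_iff blinfun.add_left)
qed

lemma C2_on_sum: "finite I \<Longrightarrow> (\<And>i. i \<in> I \<Longrightarrow> C2_on S (f i)) \<Longrightarrow> C2_on S (\<lambda>x. \<Sum>i\<in>I. f i x)"
  by (induction I rule: finite_induct) (auto intro: C2_on_const C2_on_add)

lemma blinfun_has_derivative: "(blinfun_apply L has_derivative blinfun_apply L) F"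
  by (rule bounded_linear_imp_has_derivative[OF blinfun.bounded_linear_right])

lemma blinfun_compose_fun: "blinfun_apply (a o\<^sub>L b) = (\<lambda>c. a (b c))"
  by (simp add: fun_eq_iff)

lemma C2_on_linear:
  fixes L :: "'a::real_normed_vector \<Rightarrow>\<^sub>L 'b::real_normed_vector"
  assumes "C2_on A h"
  shows "C2_on (L -` A) (\<lambda>z. h (L z))"
proof -
  obtain f' f'' where
    f: "\<forall>x\<in>A. (h has_derivative blinfun_apply (f' x)) (at x)" "\<forall>x\<in>A. (f' has_derivative blinfun_apply (f'' x)) (at x)" "continuous_on A f''"
    using assms unfolding C2_on_def by metis
  define R :: "('b \<Rightarrow>\<^sub>L 'c) \<Rightarrow>\<^sub>L ('a \<Rightarrow>\<^sub>L 'c)" where "R = Blinfun (\<lambda>a. a o\<^sub>L L)"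
  have blR: "bounded_linear (\<lambda>a::'b \<Rightarrow>\<^sub>L 'c. a o\<^sub>L L)"
    by (rule bounded_bilinear.bounded_linear_left[OF bounded_bilinear_blinfun_compose])
  have R: "blinfun_apply R = (\<lambda>a. a o\<^sub>L L)" unfolding R_def using blR by (simp add: bounded_linear_Blinfun_apply)
  have blC: "bounded_linear (\<lambda>a::'b \<Rightarrow>\<^sub>L ('b \<Rightarrow>\<^sub>L 'c). R o\<^sub>L a o\<^sub>L L)"
    by (intro bounded_linear_compose[OF bounded_bilinear.bounded_linear_left[OF bounded_bilinear_blinfun_compose]]
        bounded_bilinear.bounded_linear_right[OF bounded_bilinear_blinfun_compose])
  show ?thesis unfolding C2_on_def
  proof (intro exI conjI ballI)
    fix x assume x: "x \<in> L -` A"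
    show "((\<lambda>z. h (L z)) has_derivative blinfun_apply (f' (L x) o\<^sub>L L)) (at x)"
      using diff_chain_at[OF blinfun_has_derivative f(1)[rule_format, of "L x"]] x
      by (simp add: o_def blinfun_compose_fun)
    have "((\<lambda>z. R (f' (L z))) has_derivative (\<lambda>d. R (f'' (L x) (L d)))) (at x)"
      using diff_chain_at[OF diff_chain_at[OF blinfun_has_derivative f(2)[rule_format, of "L x"]] blinfun_has_derivative] x
      by (simp add: o_def)
    then show "((\<lambda>z. f' (L z) o\<^sub>L L) has_derivative blinfun_apply (R o\<^sub>L f'' (L x) o\<^sub>L L)) (at x)"
      by (simp add: R blinfun_compose_fun)
  next
    have "continuous_on (L -` A) (\<lambda>x. f'' (L x))"
      by (rule continuous_on_compose2[OF f(3)]) (auto intro: continuous_intros)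
    then show "continuous_on (L -` A) (\<lambda>x. R o\<^sub>L f'' (L x) o\<^sub>L L)"
      using linear_continuous_on[OF blC] continuous_on_compose2 by blast
  qed
qed



lemma sep_sum_fin:
  assumes "\<And>j. proper_fun (G j)" "sep_sum G x < \<infinity>"
  shows "G j (x $ j) = ereal (real_of_ereal (G j (x $ j)))"
proof -
  have "G j (x $ j) \<noteq> \<infinity>" using assms(2) unfolding sep_sum_def by (auto simp: sum_Pinfty)
  moreover have "G j (x $ j) \<noteq> -\<infinity>" using assms(1) unfolding proper_fun_def by auto
  ultimately show ?thesis by (cases "G j (x $ j)") auto
qed

lemma subdiff_real_iff:
  assumes "f x = ereal a"
  shows "v \<in> subdiff f x \<longleftrightarrow> (\<forall>y. ereal (a + v * (y - x)) \<le> f y)"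
  using assms unfolding subdiff_def by auto

lemma sep_sum_subdiff:
  fixes G :: "'n::finite \<Rightarrow> real \<Rightarrow> ereal"
  assumes pr: "\<And>j. proper_fun (G j)" and fin: "\<And>j. G j (x $ j) = ereal (a j)"
  shows "v \<in> subdiff (sep_sum G) x \<longleftrightarrow> (\<forall>j. v $ j \<in> subdiff (G j) (x $ j))"
proof -
  have sx: "sep_sum G x = ereal (\<Sum>j\<in>UNIV. a j)" unfolding sep_sum_def by (simp add: fin)
  have inner: "v \<bullet> (y - x) = (\<Sum>j\<in>UNIV. v $ j * (y $ j - x $ j))" for y
    by (simp add: inner_vec_def)
  show ?thesis
  proof
    assume H: "v \<in> subdiff (sep_sum G) x"
    show "\<forall>j. v $ j \<in> subdiff (G j) (x $ j)"
    proof
      fix j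
      show "v $ j \<in> subdiff (G j) (x $ j)"
        unfolding subdiff_real_iff[where f="G j" and x="x $ j", OF fin]
      proof
        fix t
        define y where "y = (\<chi> i. if i = j then t else x $ i)"
        have "sep_sum G x + ereal (v \<bullet> (y - x)) \<le> sep_sum G y"
          using H unfolding subdiff_def by auto
        moreover have "v \<bullet> (y - x) = v $ j * (t - x $ j)"
        proof -
          have "(\<Sum>i\<in>UNIV. v $ i * (y $ i - x $ i)) = (\<Sum>i\<in>UNIV. if i = j then v $ j * (t - x $ j) else 0)"
            by (rule sum.cong) (auto simp: y_def)
          then show ?thesis unfolding inner by simp
        qed
        moreover have "sep_sum G y = G j t + ereal (\<Sum>i\<in>UNIV - {j}. a i)"
        proof -
          have "sep_sum G y = G j (y $ j) + (\<Sum>i\<in>UNIV - {j}. G i (y $ i))"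
            unfolding sep_sum_def by (simp add: sum.remove)
          also have "(\<Sum>i\<in>UNIV - {j}. G i (y $ i)) = (\<Sum>i\<in>UNIV - {j}. ereal (a i))"
            by (rule sum.cong) (auto simp: y_def fin)
          finally show ?thesis by (simp add: y_def)
        qed
        moreover have "(\<Sum>j\<in>UNIV. a j) = a j + (\<Sum>i\<in>UNIV - {j}. a i)"
          by (simp add: sum.remove)
        ultimately have *: "ereal (a j + (\<Sum>i\<in>UNIV - {j}. a i) + v $ j * (t - x $ j)) \<le> G j t + ereal (\<Sum>i\<in>UNIV - {j}. a i)"
          using sx by simp
        show "ereal (a j + v $ j * (t - x $ j)) \<le> G j t"
        proof (cases "G j t")
          case (real r) then show ?thesis using * by simp
        next
          case PInf then show ?thesis by simp
        next
          case MInf then show ?thesis using pr[of j] unfolding proper_fun_def by auto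
        qed
      qed
    qed
  next
    assume H: "\<forall>j. v $ j \<in> subdiff (G j) (x $ j)"
    show "v \<in> subdiff (sep_sum G) x"
      unfolding subdiff_def
    proof (intro CollectI conjI allI)
      show "sep_sum G x < \<infinity>" using sx by simp
      fix y
      have "\<forall>j. ereal (a j + v $ j * (y $ j - x $ j)) \<le> G j (y $ j)"
        using H subdiff_real_iff[where f="G _" and x="x $ _", OF fin] by blast
      then have "(\<Sum>j\<in>UNIV. ereal (a j + v $ j * (y $ j - x $ j))) \<le> sep_sum G y"
        unfolding sep_sum_def by (intro sum_mono) auto
      then show "sep_sum G x + ereal (v \<bullet> (y - x)) \<le> sep_sum G y"
        using sx inner by (simp add: sum.distrib)
    qed
  qed
qed



lemma blinfun_real_field_deriv:
  fixes D :: "real \<Rightarrow>\<^sub>L real"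
  assumes "(h has_derivative blinfun_apply D) F"
  shows "(h has_field_derivative (D 1)) F"
proof -
  have "blinfun_apply D = (\<lambda>t. D 1 * t)"
  proof
    fix t :: real
    have "D t = D (t *\<^sub>R 1)" by simp
    also have "\<dots> = t *\<^sub>R D 1" by (rule blinfun.scaleR_right)
    finally show "D t = D 1 * t" by simp
  qed
  then show ?thesis using assms unfolding has_field_derivative_def by simp
qed

lemma subdiff_closed_graph:
  fixes f :: "real \<Rightarrow> ereal"
  assumes cl: "closed_fun1 f" and pr: "proper_fun f" and fx: "f x0 < \<infinity>"
    and ys: "ys \<longlonglongrightarrow> x0" and vs: "vs \<longlonglongrightarrow> v" and sub: "\<And>k. vs k \<in> subdiff f (ys k)"
  shows "v \<in> subdiff f x0"
  unfolding subdiff_def inner_real_def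
proof (intro CollectI conjI allI)
  show "f x0 < \<infinity>" by fact
  fix y
  show "f x0 + ereal (v * (y - x0)) \<le> f y"
  proof (cases "f y")
    case PInf then show ?thesis by simp
  next
    case MInf then show ?thesis using pr unfolding proper_fun_def by auto
  next
    case (real r)
    have E: "(ys k, r - vs k * (y - ys k)) \<in> epigraph1 f" for k
    proof -
      have "f (ys k) < \<infinity>" "f (ys k) + ereal (vs k * (y - ys k)) \<le> f y"
        using sub[of k] unfolding subdiff_def by auto
      moreover have "f (ys k) \<noteq> -\<infinity>" using pr unfolding proper_fun_def by auto
      ultimately show ?thesis using real unfolding epigraph1_def
        by (cases "f (ys k)") auto
    qed
    have L: "(\<lambda>k. (ys k, r - vs k * (y - ys k))) \<longlonglongrightarrow> (x0, r - v * (y - x0))"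
      by (intro tendsto_intros ys vs)
    have "(x0, r - v * (y - x0)) \<in> epigraph1 f"
      by (rule closed_sequentially[OF cl[unfolded closed_fun1_def], of "\<lambda>k. (ys k, r - vs k * (y - ys k))", OF E L])
    then have "f x0 \<le> ereal (r - v * (y - x0))" unfolding epigraph1_def by simp
    moreover have "f x0 \<noteq> -\<infinity>" using pr unfolding proper_fun_def by auto
    ultimately show ?thesis using real fx by (cases "f x0") auto
  qed
qed

lemma deriv_in_subdiff:
  fixes f :: "real \<Rightarrow> ereal"
  assumes cv: "convex_fun1 f" and pr: "proper_fun f" and V: "open V" "y \<in> V"
    and fh: "\<And>z. z \<in> V \<Longrightarrow> f z = ereal (h z)"
    and d: "(h has_field_derivative d) (at y)"
  shows "d \<in> subdiff f y"
  unfolding subdiff_def inner_real_def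
proof (intro CollectI conjI allI)
  show "f y < \<infinity>" using fh V by simp
  fix z
  show "f y + ereal (d * (z - y)) \<le> f z"
  proof (cases "f z")
    case PInf then show ?thesis by simp
  next
    case MInf then show ?thesis using pr unfolding proper_fun_def by auto
  next
    case (real r)
    have epi: "f ((1 - t) * y + t * z) \<le> ereal ((1 - t) * h y + t * r)" if "0 \<le> t" "t \<le> 1" for t
    proof -
      have "(y, h y) \<in> epigraph1 f" "(z, r) \<in> epigraph1 f"
        using fh V real unfolding epigraph1_def by auto
      then have "(1 - t) *\<^sub>R (y, h y) + t *\<^sub>R (z, r) \<in> epigraph1 f"
        using cv that unfolding convex_fun1_def by (intro convexD) auto
      then show ?thesis unfolding epigraph1_def by simp
    qed
    define q where "q t = h (y + t * (z - y))" for t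
    have dl: "DERIV (\<lambda>t. y + t * (z - y)) 0 :> (z - y)"
      by (auto intro!: derivative_eq_intros)
    have "DERIV q 0 :> d * (z - y)"
      unfolding q_def using DERIV_chain2[OF _ dl, of h d] d by simp
    then have lim: "((\<lambda>t. (q t - q 0) / t) \<longlongrightarrow> d * (z - y)) (at_right 0)"
      unfolding has_field_derivative_iff by (auto intro: tendsto_mono at_le)
    have "\<forall>\<^sub>F t in at 0. y + t * (z - y) \<in> V"
    proof -
      have "((\<lambda>t. y + t * (z - y)) \<longlongrightarrow> y + 0 * (z - y)) (at 0)"
        by (intro tendsto_intros)
      then show ?thesis using V by (simp add: tendsto_def)
    qed
    then have ev1: "\<forall>\<^sub>F t in at_right 0. y + t * (z - y) \<in> V"
      by (rule filter_leD[OF at_le, rotated]) simp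
    have ev2: "\<forall>\<^sub>F t in at_right (0::real). 0 < t \<and> t \<le> 1"
      unfolding eventually_at_right_field by (intro exI[of _ 1]) auto
    have "\<forall>\<^sub>F t in at_right 0. (q t - q 0) / t \<le> r - h y"
      using ev1 ev2
    proof eventually_elim
      case (elim t)
      have "(1 - t) * y + t * z = y + t * (z - y)" by (simp add: algebra_simps)
      with epi[of t] elim have "f (y + t * (z - y)) \<le> ereal ((1 - t) * h y + t * r)" by simp
      with fh elim have "h (y + t * (z - y)) \<le> (1 - t) * h y + t * r" by simp
      then have "q t - q 0 \<le> t * (r - h y)" unfolding q_def by (simp add: algebra_simps)
      then show ?case using elim by (simp add: divide_le_eq mult.commute)
    qed
    then have "d * (z - y) \<le> r - h y"
      by (rule tendsto_upperbound[OF lim]) simp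
    then show ?thesis using real fh V by simp
  qed
qed



lemma axis_sum_component:
  fixes c :: "'n::finite \<Rightarrow> real"
  shows "(\<Sum>j\<in>I. c j *\<^sub>R axis j (1::real)) $ i = (if i \<in> I then c i else 0)"
proof -
  have "(\<Sum>j\<in>I. c j *\<^sub>R axis j (1::real)) $ i = (\<Sum>j\<in>I. c j * (axis j 1 $ i))"
    by (simp add: sum_component)
  also have "\<dots> = (\<Sum>j\<in>I. if j = i then c i else 0)"
    by (rule sum.cong) (auto simp: axis_def)
  finally show ?thesis by simp
qed

lemma aff_hull_product:
  fixes C :: "(real^'n::finite) set" and S :: "'n set"
  assumes C: "C = {v. \<forall>j. v $ j \<in> D j}"
    and sing: "\<And>j. j \<in> S \<Longrightarrow> D j = {a j}"
    and two: "\<And>j. j \<notin> S \<Longrightarrow> p j \<in> D j \<and> q j \<in> D j \<and> p j \<noteq> q j"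
  shows "affine hull C = {v. \<forall>j\<in>S. v $ j = a j}"
proof
  have "affine {v::real^'n. \<forall>j\<in>S. v $ j = a j}"
    unfolding affine_def
  proof (intro ballI allI impI)
    fix x y :: "real^'n" and u v :: real
    assume "x \<in> {v. \<forall>j\<in>S. v $ j = a j}" "y \<in> {v. \<forall>j\<in>S. v $ j = a j}" "u + v = 1"
    then show "u *\<^sub>R x + v *\<^sub>R y \<in> {v. \<forall>j\<in>S. v $ j = a j}"
      by (simp add: distrib_right[symmetric])
  qed
  moreover have "C \<subseteq> {v. \<forall>j\<in>S. v $ j = a j}" using C sing by auto
  ultimately show "affine hull C \<subseteq> {v. \<forall>j\<in>S. v $ j = a j}"
    by (rule hull_minimal[rotated])
next
  define v0 where "v0 = (\<chi> j. if j \<in> S then a j else p j)"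
  have v0C: "v0 \<in> C" using C sing two by (auto simp: v0_def)
  then have v0h: "v0 \<in> affine hull C" by (simp add: hull_inc)
  have ax: "axis j 1 \<in> span ((\<lambda>x. - v0 + x) ` C)" if j: "j \<notin> S" for j
  proof -
    define w where "w = (\<chi> i. if i = j then q j else v0 $ i)"
    have "w \<in> C" using C v0C two[OF j] by (auto simp: w_def)
    then have "-v0 + w \<in> span ((\<lambda>x. - v0 + x) ` C)" by (intro span_base) auto
    moreover have "-v0 + w = (q j - p j) *\<^sub>R axis j 1"
      using j by (auto simp: vec_eq_iff w_def v0_def axis_def)
    ultimately have "(1 / (q j - p j)) *\<^sub>R ((q j - p j) *\<^sub>R axis j (1::real)) \<in> span ((\<lambda>x. - v0 + x) ` C)"
      by (metis span_mul scaleR_conv_of_real)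
    then show ?thesis using two[OF j] by simp
  qed
  show "{v. \<forall>j\<in>S. v $ j = a j} \<subseteq> affine hull C"
  proof
    fix w assume w: "w \<in> {v. \<forall>j\<in>S. v $ j = a j}"
    have eq: "-v0 + w = (\<Sum>j\<in>UNIV - S. (w $ j - v0 $ j) *\<^sub>R axis j (1::real))"
      using w unfolding vec_eq_iff axis_sum_component by (auto simp: v0_def)
    have "-v0 + w \<in> span ((\<lambda>x. - v0 + x) ` C)"
      unfolding eq by (intro span_sum span_scale ax) auto
    then show "w \<in> affine hull C"
      unfolding affine_hull_span_gen[OF v0h] by (auto intro!: image_eqI[of _ _ "-v0 + w"])
  qed
qed

lemma min_norm_elem_coord:
  fixes S :: "'n::finite set"
  shows "min_norm_elem {v::real^'n. \<forall>j\<in>S. v $ j = a j} = (\<chi> j. if j \<in> S then a j else 0)"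
    (is "min_norm_elem ?A = ?e")
proof -
  have nn: "x \<bullet> x = (\<Sum>j\<in>UNIV. if j \<in> S then (a j)^2 else (x $ j)^2)" if "x \<in> ?A" for x
    unfolding inner_vec_def using that by (intro sum.cong) (auto simp: power2_eq_square)
  have ne: "?e \<bullet> ?e = (\<Sum>j\<in>UNIV. if j \<in> S then (a j)^2 else 0)"
    unfolding inner_vec_def by (intro sum.cong) (auto simp: power2_eq_square)
  have diff: "x \<bullet> x - ?e \<bullet> ?e = (\<Sum>j\<in>UNIV. if j \<in> S then 0 else (x $ j)^2)" if "x \<in> ?A" for x
    unfolding nn[OF that] ne sum_subtractf[symmetric] by (intro sum.cong) auto
  have eA: "?e \<in> ?A" by simp
  show ?thesis unfolding min_norm_elem_def
  proof (rule the_equality)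
    show "?e \<in> ?A \<and> (\<forall>b\<in>?A. norm ?e \<le> norm b)"
    proof (intro conjI ballI eA)
      fix b assume "b \<in> ?A"
      then have "0 \<le> b \<bullet> b - ?e \<bullet> ?e" unfolding diff[OF \<open>b \<in> ?A\<close>] by (intro sum_nonneg) auto
      then show "norm ?e \<le> norm b" by (simp add: norm_le)
    qed
  next
    fix e assume H: "e \<in> ?A \<and> (\<forall>b\<in>?A. norm e \<le> norm b)"
    then have "e \<bullet> e - ?e \<bullet> ?e \<le> 0" using eA norm_le by fastforce
    moreover have "0 \<le> (\<Sum>j\<in>UNIV. if j \<in> S then 0 else (e $ j)^2)"
      by (intro sum_nonneg) auto
    ultimately have "(\<Sum>j\<in>UNIV. if j \<in> S then 0 else (e $ j)^2) = 0"
      using diff[of e] H by linarith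
    then have "\<forall>j\<in>UNIV. (if j \<in> S then 0 else (e $ j)^2) = 0"
      by (subst (asm) sum_nonneg_eq_0_iff) auto
    then show "e = ?e" using H by (auto simp: vec_eq_iff split: if_splits)
  qed
qed

lemma orth_comp_coord:
  fixes S :: "'n::finite set"
  shows "orthogonal_comp {u::real^'n. \<forall>j\<in>S. u $ j = 0} = {w. \<forall>j. j \<notin> S \<longrightarrow> w $ j = 0}"
proof safe
  fix w j assume w: "w \<in> orthogonal_comp {u::real^'n. \<forall>j\<in>S. u $ j = 0}" and j: "j \<notin> S"
  have "axis j 1 \<in> {u::real^'n. \<forall>j\<in>S. u $ j = 0}" using j by (auto simp: axis_def)
  then have "axis j 1 \<bullet> w = 0" using w unfolding orthogonal_comp_def orthogonal_def by auto
  then show "w $ j = 0" by (simp add: inner_axis')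
next
  fix w :: "real^'n" assume w: "\<forall>j. j \<notin> S \<longrightarrow> w $ j = 0"
  show "w \<in> orthogonal_comp {u::real^'n. \<forall>j\<in>S. u $ j = 0}"
    unfolding orthogonal_comp_def orthogonal_def inner_vec_def
    using w by (auto intro!: sum.neutral)
qed



lemma tangent_affine_coord:
  fixes xs :: "real^'n::finite" and S :: "'n set"
  defines "T \<equiv> {u::real^'n. \<forall>j. j \<notin> S \<longrightarrow> u $ j = 0}"
  shows "tangent_space ((\<lambda>u. xs + u) ` T) xs = T"
proof
  show "T \<subseteq> tangent_space ((\<lambda>u. xs + u) ` T) xs"
  proof
    fix v assume v: "v \<in> T"
    show "v \<in> tangent_space ((\<lambda>u. xs + u) ` T) xs"
      unfolding tangent_space_def
    proof (intro CollectI exI conjI ballI)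
      show "(0::real) < 1" by simp
      show "(\<lambda>t. xs + t *\<^sub>R v) 0 = xs" by simp
      show "((\<lambda>t. xs + t *\<^sub>R v) has_vector_derivative v) (at 0)"
        by (auto intro!: derivative_eq_intros)
      fix t :: real
      show "xs + t *\<^sub>R v \<in> (\<lambda>u. xs + u) ` T"
        using v by (auto simp: T_def)
    qed
  qed
next
  show "tangent_space ((\<lambda>u. xs + u) ` T) xs \<subseteq> T"
  proof
    fix v assume "v \<in> tangent_space ((\<lambda>u. xs + u) ` T) xs"
    then obtain \<gamma> e where e: "e > 0" and g0: "\<gamma> 0 = xs"
      and gM: "\<forall>t\<in>{-e<..<e}. \<gamma> t \<in> (\<lambda>u. xs + u) ` T" and gd: "(\<gamma> has_vector_derivative v) (at 0)"
      unfolding tangent_space_def by blast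
    show "v \<in> T" unfolding T_def
    proof (intro CollectI allI impI)
      fix j assume j: "j \<notin> S"
      have "((\<lambda>t. \<gamma> t $ j) has_derivative (\<lambda>t. (t *\<^sub>R v) $ j)) (at 0)"
        using bounded_linear.has_derivative[OF bounded_linear_vec_nth gd[unfolded has_vector_derivative_def]] .
      then have D1: "((\<lambda>t. \<gamma> t $ j) has_field_derivative (v $ j)) (at 0)"
        unfolding has_field_derivative_def by (simp add: mult.commute[of _ "v $ j"])
      have D2: "\<gamma> t $ j = xs $ j" if "t \<in> ball 0 e" for t
      proof -
        have "t \<in> {-e<..<e}" using that by (auto simp: dist_real_def)
        then obtain u where "u \<in> T" "\<gamma> t = xs + u" using gM by blast
        then show ?thesis using j by (simp add: T_def)
      qed
      have "((\<lambda>t. xs $ j) has_field_derivative (v $ j)) (at 0)"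
        by (rule has_field_derivative_transform_within_open[OF D1, of "ball 0 e"]) (use e D2 in auto)
      moreover have "((\<lambda>t. xs $ j) has_field_derivative 0) (at 0)" by simp
      ultimately show "v $ j = 0" by (rule DERIV_unique)
    qed
  qed
qed



lemma C2_on_id: "C2_on S (\<lambda>z. z)"
  unfolding C2_on_def
  by (rule exI[of _ "\<lambda>_. id_blinfun"], rule exI[of _ "\<lambda>_. 0"])
     (auto intro: has_derivative_eq_rhs[OF has_derivative_ident] has_derivative_eq_rhs[OF has_derivative_const] simp: fun_eq_iff)

lemma open_coord_set:
  fixes V :: "'n::finite \<Rightarrow> real set"
  assumes "\<And>j. j \<in> S \<Longrightarrow> open (V j)"
  shows "open {z::real^'n. \<forall>j\<in>S. z $ j \<in> V j}"
proof -
  have "{z::real^'n. \<forall>j\<in>S. z $ j \<in> V j} = (\<Inter>j\<in>S. (\<lambda>z. z $ j) -` V j)" by auto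
  moreover have "open (\<Inter>j\<in>S. (\<lambda>z::real^'n. z $ j) -` V j)"
    using assms by (intro open_INT finite) (auto intro: open_vimage_vec_nth)
  ultimately show ?thesis by simp
qed

lemma manifold_part:
  fixes xs :: "real^'n::finite" and S :: "'n set" and V :: "'n \<Rightarrow> real set"
  assumes "\<And>j. j \<in> S \<Longrightarrow> open (V j)"
  defines "T \<equiv> {u::real^'n. \<forall>j. j \<notin> S \<longrightarrow> u $ j = 0}"
    and "U \<equiv> {z::real^'n. \<forall>j\<in>S. z $ j \<in> V j}"
  shows "C2_manifold ((\<lambda>u. xs + u) ` T \<inter> U)"
  unfolding C2_manifold_def
proof
  fix y assume "y \<in> (\<lambda>u. xs + u) ` T \<inter> U"
  then have yU: "y \<in> U" by blast
  have oU: "open U" unfolding U_def by (rule open_coord_set) (use assms in auto)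
  define W where "W = (\<lambda>z. z + xs) -` U"
  have oW: "open W" unfolding W_def by (rule continuous_open_vimage[OF oU]) (intro continuous_intros)
  have sT: "subspace T" unfolding subspace_def T_def by auto
  have c1: "C2_on U (\<lambda>z. z - xs)"
    using C2_on_add[OF C2_on_id C2_on_const, of U "-xs"] by simp
  have c2: "C2_on W (\<lambda>z. z + xs)"
    using C2_on_add[OF C2_on_id C2_on_const, of W "xs"] by simp
  have im: "(\<lambda>z. z - xs) ` U = W"
    unfolding W_def by (auto intro!: image_eqI[of _ _ "_ + xs"])
  have im2: "(\<lambda>z. z - xs) ` ((\<lambda>u. xs + u) ` T \<inter> U \<inter> U) = T \<inter> W"
  proof
    show "(\<lambda>z. z - xs) ` ((\<lambda>u. xs + u) ` T \<inter> U \<inter> U) \<subseteq> T \<inter> W"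
      unfolding W_def by (auto simp: add.commute)
    show "T \<inter> W \<subseteq> (\<lambda>z. z - xs) ` ((\<lambda>u. xs + u) ` T \<inter> U \<inter> U)"
    proof
      fix x assume "x \<in> T \<inter> W"
      then show "x \<in> (\<lambda>z. z - xs) ` ((\<lambda>u. xs + u) ` T \<inter> U \<inter> U)"
        unfolding W_def by (intro image_eqI[of _ _ "xs + x"]) (auto simp: add.commute)
    qed
  qed
  show "\<exists>Va Wa (\<phi>::real^'n \<Rightarrow> real^'n) \<psi> L.
          open Va \<and> y \<in> Va \<and> open Wa \<and> subspace L \<and> C2_on Va \<phi> \<and> C2_on Wa \<psi> \<and>
          \<phi> ` Va = Wa \<and> (\<forall>z\<in>Va. \<psi> (\<phi> z) = z) \<and> \<phi> ` ((\<lambda>u. xs + u) ` T \<inter> U \<inter> Va) = L \<inter> Wa"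
    by (rule exI[of _ U], rule exI[of _ W], rule exI[of _ "\<lambda>z. z - xs"], rule exI[of _ "\<lambda>z. z + xs"], rule exI[of _ T])
       (use oU yU oW sT c1 c2 im im2 in auto)
qed



theorem lemma1:
  fixes G :: "'n::finite \<Rightarrow> real \<Rightarrow> ereal" and xs :: "real^'n"
  assumes "\<And>j. proper_fun (G j)"
    and "\<And>j. closed_fun1 (G j)"
    and "\<And>j. convex_fun1 (G j)"
    and "xs \<in> edom (sep_sum G)"
    and "subdiff (sep_sum G) xs \<noteq> {}"
    and "\<And>j. j \<in> gen_support G xs \<Longrightarrow> C2_near (G j) (xs $ j)"
  shows "partly_smooth (sep_sum G) xs ((\<lambda>u. xs + u) ` model_subspace G xs)"
proof -
  note pr = assms(1) and cl = assms(2) and cv = assms(3)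
  define S where "S = gen_support G xs"
  define T where "T = {u::real^'n. \<forall>j. j \<notin> S \<longrightarrow> u $ j = 0}"
  have T: "model_subspace G xs = T" unfolding model_subspace_def T_def S_def by simp
  define M where "M = (\<lambda>u. xs + u) ` T"
  define a where "a j = real_of_ereal (G j (xs $ j))" for j
  have fin: "G j (xs $ j) = ereal (a j)" for j
    unfolding a_def using sep_sum_fin[OF pr, where x=xs and j=j] assms(4) by (simp add: edom_def)
  define D where "D j = subdiff (G j) (xs $ j)" for j
  have subx: "v \<in> subdiff (sep_sum G) xs \<longleftrightarrow> (\<forall>j. v $ j \<in> D j)" for v
    unfolding D_def by (rule sep_sum_subdiff[OF pr fin])
  obtain w0 where w0: "w0 \<in> subdiff (sep_sum G) xs" using assms(5) by blast
  have w0D: "w0 $ j \<in> D j" for j using w0 subx by blast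
  have "\<forall>j. \<exists>v. j \<in> S \<longrightarrow> D j = {v}"
    unfolding S_def gen_support_def D_def by blast
  then obtain c where c: "\<And>j. j \<in> S \<Longrightarrow> D j = {c j}"
    using choice[OF \<open>\<forall>j. \<exists>v. j \<in> S \<longrightarrow> D j = {v}\<close>] by blast
  have two: "j \<notin> S \<Longrightarrow> w0 $ j \<in> D j \<and> (SOME q. q \<in> D j \<and> q \<noteq> w0 $ j) \<in> D j \<and> w0 $ j \<noteq> (SOME q. q \<in> D j \<and> q \<noteq> w0 $ j)" for j
  proof -
    assume j: "j \<notin> S"
    have "\<exists>q. q \<in> D j \<and> q \<noteq> w0 $ j"
    proof (rule ccontr)
      assume "\<not> ?thesis"
      then have "D j = {w0 $ j}" using w0D[of j] by blast
      then show False using j unfolding S_def gen_support_def D_def by blast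
    qed
    from someI_ex[OF this] show ?thesis using w0D[of j] by auto
  qed
  obtain V h where Vh: "\<And>j. j \<in> S \<Longrightarrow> open (V j) \<and> xs $ j \<in> V j \<and> C2_on (V j) (h j) \<and> (\<forall>z\<in>V j. G j z = ereal (h j z))"
  proof -
    have "\<forall>j. \<exists>Vh. j \<in> S \<longrightarrow> open (fst Vh) \<and> xs $ j \<in> fst Vh \<and> C2_on (fst Vh) (snd Vh) \<and> (\<forall>z\<in>fst Vh. G j z = ereal (snd Vh z))"
      using assms(6) unfolding C2_near_def S_def by fastforce
    note ch = choice[OF this]
    then obtain F where "\<And>j. j \<in> S \<Longrightarrow> open (fst (F j)) \<and> xs $ j \<in> fst (F j) \<and> C2_on (fst (F j)) (snd (F j)) \<and> (\<forall>z\<in>fst (F j). G j z = ereal (snd (F j) z))"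
      by blast
    then show ?thesis using that[of "\<lambda>j. fst (F j)" "\<lambda>j. snd (F j)"] by blast
  qed
  obtain fp fpp where fpd: "\<And>j. j \<in> S \<Longrightarrow> (\<forall>x\<in>V j. (h j has_derivative blinfun_apply (fp j x)) (at x)) \<and>
      (\<forall>x\<in>V j. (fp j has_derivative blinfun_apply (fpp j x)) (at x)) \<and> continuous_on (V j) (fpp j)"
  proof -
    have "\<forall>j. \<exists>ff. j \<in> S \<longrightarrow> (\<forall>x\<in>V j. (h j has_derivative blinfun_apply (fst ff x)) (at x)) \<and>
      (\<forall>x\<in>V j. (fst ff has_derivative blinfun_apply (snd ff x)) (at x)) \<and> continuous_on (V j) (snd ff)"
    proof
      fix j
      show "\<exists>ff. j \<in> S \<longrightarrow> (\<forall>x\<in>V j. (h j has_derivative blinfun_apply (fst ff x)) (at x)) \<and>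
        (\<forall>x\<in>V j. (fst ff has_derivative blinfun_apply (snd ff x)) (at x)) \<and> continuous_on (V j) (snd ff)"
      proof (cases "j \<in> S")
        case True
        then obtain f' f'' where "(\<forall>x\<in>V j. (h j has_derivative blinfun_apply (f' x)) (at x)) \<and>
          (\<forall>x\<in>V j. (f' has_derivative blinfun_apply (f'' x)) (at x)) \<and> continuous_on (V j) f''"
          using Vh[OF True] unfolding C2_on_def by blast
        then show ?thesis by (intro exI[of _ "(f', f'')"]) simp
      qed simp
    qed
    note ch = choice[OF this]
    then obtain F where "\<And>j. j \<in> S \<Longrightarrow> (\<forall>x\<in>V j. (h j has_derivative blinfun_apply (fst (F j) x)) (at x)) \<and>
      (\<forall>x\<in>V j. (fst (F j) has_derivative blinfun_apply (snd (F j) x)) (at x)) \<and> continuous_on (V j) (snd (F j))"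
      by blast
    then show ?thesis using that[of "\<lambda>j. fst (F j)" "\<lambda>j. snd (F j)"] by blast
  qed
  define U where "U = {z::real^'n. \<forall>j\<in>S. z $ j \<in> V j}"
  have oU: "open U" unfolding U_def by (rule open_coord_set) (use Vh in auto)
  have xU: "xs \<in> U" unfolding U_def using Vh by auto
  have part1: "\<exists>U. open U \<and> xs \<in> U \<and> C2_manifold (M \<inter> U) \<and> C2_restricted (sep_sum G) (M \<inter> U)"
  proof (intro exI conjI)
    show "open U" "xs \<in> U" by fact+
    show "C2_manifold (M \<inter> U)" unfolding M_def T_def U_def by (rule manifold_part) (use Vh in auto)
    define hh where "hh z = (\<Sum>j\<in>S. h j (z $ j)) + (\<Sum>j\<in>UNIV - S. a j)" for z :: "real^'n"
    have C2h: "C2_on U hh"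
      unfolding hh_def
    proof (intro C2_on_add C2_on_const C2_on_sum)
      fix j assume j: "j \<in> S"
      define P :: "(real^'n) \<Rightarrow>\<^sub>L real" where "P = Blinfun (\<lambda>z. z $ j)"
      have P: "blinfun_apply P = (\<lambda>z. z $ j)" unfolding P_def
        by (rule bounded_linear_Blinfun_apply[OF bounded_linear_vec_nth])
      have "C2_on (P -` V j) (\<lambda>z. h j (P z))" by (rule C2_on_linear) (use Vh j in auto)
      then have "C2_on (P -` V j) (\<lambda>z. h j (z $ j))" by (simp add: P)
      moreover have "U \<subseteq> P -` V j" using j by (auto simp: U_def P)
      ultimately show "C2_on U (\<lambda>z. h j (z $ j))" by (rule C2_on_subset)
    qed simp
    show "C2_restricted (sep_sum G) (M \<inter> U)"
      unfolding C2_restricted_def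
    proof
      fix y assume yMU: "y \<in> M \<inter> U"
      have eqs: "\<forall>z\<in>M \<inter> U \<inter> U. sep_sum G z = ereal (hh z)"
      proof
        fix z assume z: "z \<in> M \<inter> U \<inter> U"
        then have zj: "j \<notin> S \<Longrightarrow> z $ j = xs $ j" for j unfolding M_def T_def by auto
        have "sep_sum G z = (\<Sum>j\<in>UNIV. ereal (if j \<in> S then h j (z $ j) else a j))"
          unfolding sep_sum_def
        proof (rule sum.cong)
          fix j :: 'n
          show "G j (z $ j) = ereal (if j \<in> S then h j (z $ j) else a j)"
            using Vh[of j] z zj[of j] fin[of j] by (auto simp: U_def)
        qed simp
        also have "\<dots> = ereal (hh z)"
          unfolding sum_ereal hh_def by (simp add: sum.If_cases Compl_eq_Diff_UNIV)
        finally show "sep_sum G z = ereal (hh z)" .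
      qed
      show "\<exists>Va ha. open Va \<and> y \<in> Va \<and> C2_on Va ha \<and> (\<forall>z\<in>M \<inter> U \<inter> Va. sep_sum G z = ereal (ha z))"
        by (rule exI[of _ U], rule exI[of _ hh]) (use oU C2h yMU eqs in blast)
    qed
  qed
  have part2: "tangent_space M xs = orthogonal_comp (Lin (subdiff (sep_sum G) xs))"
  proof -
    have C: "subdiff (sep_sum G) xs = {v. \<forall>j. v $ j \<in> D j}" using subx by blast
    have aff: "affine hull (subdiff (sep_sum G) xs) = {v. \<forall>j\<in>S. v $ j = c j}"
      unfolding C by (rule aff_hull_product[OF refl c two]) auto
    have lin: "Lin (subdiff (sep_sum G) xs) = {u. \<forall>j\<in>S. u $ j = 0}"
    proof -
      have "Lin (subdiff (sep_sum G) xs) = (\<lambda>b. b - (\<chi> j. if j \<in> S then c j else 0)) ` {v. \<forall>j\<in>S. v $ j = c j}"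
        unfolding Lin_def aff min_norm_elem_coord ..
      also have "\<dots> = {u. \<forall>j\<in>S. u $ j = 0}"
      proof
        show "{u. \<forall>j\<in>S. u $ j = 0} \<subseteq> (\<lambda>b. b - (\<chi> j. if j \<in> S then c j else 0)) ` {v. \<forall>j\<in>S. v $ j = c j}"
        proof
          fix u :: "real^'n" assume "u \<in> {u. \<forall>j\<in>S. u $ j = 0}"
          then show "u \<in> (\<lambda>b. b - (\<chi> j. if j \<in> S then c j else 0)) ` {v. \<forall>j\<in>S. v $ j = c j}"
            by (intro image_eqI[of _ _ "u + (\<chi> j. if j \<in> S then c j else 0)"]) auto
        qed
      qed auto
      finally show ?thesis .
    qed
    show ?thesis unfolding lin orth_comp_coord M_def T_def by (rule tangent_affine_coord)
  qed
  have part3: "pk_continuous_rel (subdiff (sep_sum G)) xs M"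
    unfolding pk_continuous_rel_def
  proof (intro conjI allI impI ballI)
    fix ys vs v
    assume H: "(\<forall>k. ys k \<in> M) \<and> ys \<longlonglongrightarrow> xs \<and> (\<forall>k. vs k \<in> subdiff (sep_sum G) (ys k)) \<and> vs \<longlonglongrightarrow> v"
    show "v \<in> subdiff (sep_sum G) xs"
      unfolding subx
    proof
      fix j
      have "vs k $ j \<in> subdiff (G j) (ys k $ j)" for k
      proof -
        have "sep_sum G (ys k) < \<infinity>" using H unfolding subdiff_def by blast
        then have F: "G i (ys k $ i) = ereal (real_of_ereal (G i (ys k $ i)))" for i
          using sep_sum_fin[where G=G and x="ys k" and j=i] pr by blast
        show ?thesis using sep_sum_subdiff[OF pr F] H by blast
      qed
      note E = this
      have L1: "(\<lambda>k. ys k $ j) \<longlonglongrightarrow> xs $ j" and L2: "(\<lambda>k. vs k $ j) \<longlonglongrightarrow> v $ j"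
        using H by (auto intro: tendsto_vec_nth)
      have fx: "G j (xs $ j) < \<infinity>" using fin[of j] by simp
      show "v $ j \<in> D j" unfolding D_def
        by (rule subdiff_closed_graph[where f="G j", OF cl pr fx L1 L2 E])
    qed
  next
    fix v ys
    assume v: "v \<in> subdiff (sep_sum G) xs" and H: "(\<forall>k. ys k \<in> M) \<and> ys \<longlonglongrightarrow> xs"
    define vs where "vs k = (\<chi> j. if j \<in> S then fp j (ys k $ j) 1 else v $ j)" for k
    have ev: "\<forall>\<^sub>F k in sequentially. \<forall>j\<in>S. ys k $ j \<in> V j"
    proof (rule eventually_ball_finite)
      show "finite S" by simp
      show "\<forall>j\<in>S. \<forall>\<^sub>F k in sequentially. ys k $ j \<in> V j"
      proof
        fix j assume j: "j \<in> S"
        have "(\<lambda>k. ys k $ j) \<longlonglongrightarrow> xs $ j" using H by (auto intro: tendsto_vec_nth)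
        then show "\<forall>\<^sub>F k in sequentially. ys k $ j \<in> V j"
          using Vh[OF j] by (auto dest: topological_tendstoD)
      qed
    qed
    have dsub: "fp j y 1 \<in> subdiff (G j) y" if "j \<in> S" "y \<in> V j" for j y
      by (rule deriv_in_subdiff[where f="G j" and V="V j" and y=y and h="h j", OF cv pr])
         (use Vh[OF that(1)] fpd[OF that(1)] that in \<open>auto intro: blinfun_real_field_deriv\<close>)
    show "\<exists>vs. (\<forall>\<^sub>F k in sequentially. vs k \<in> subdiff (sep_sum G) (ys k)) \<and> vs \<longlonglongrightarrow> v"
    proof (intro exI conjI)
      show "\<forall>\<^sub>F k in sequentially. vs k \<in> subdiff (sep_sum G) (ys k)"
        using ev
      proof eventually_elim
        case (elim k)
        have yj: "j \<notin> S \<Longrightarrow> ys k $ j = xs $ j" for j using H[THEN conjunct1, rule_format, of k] unfolding M_def T_def by auto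
        have fk: "G j (ys k $ j) = ereal (if j \<in> S then h j (ys k $ j) else a j)" for j
          using Vh[of j] elim yj[of j] fin[of j] by auto
        show ?case
          unfolding sep_sum_subdiff[OF pr fk]
        proof
          fix j
          show "vs k $ j \<in> subdiff (G j) (ys k $ j)"
          proof (cases "j \<in> S")
            case True then show ?thesis using dsub elim by (simp add: vs_def)
          next
            case False then show ?thesis using v subx yj[of j] by (simp add: vs_def D_def)
          qed
        qed
      qed
      show "vs \<longlonglongrightarrow> v"
        unfolding vs_def
      proof (rule vec_tendstoI)
        fix j
        show "(\<lambda>k. (\<chi> j. if j \<in> S then fp j (ys k $ j) 1 else v $ j) $ j) \<longlonglongrightarrow> v $ j"
        proof (cases "j \<in> S")
          case False then show ?thesis by simp
        next
          case True
          have xV: "xs $ j \<in> V j" using Vh[OF True] by blast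
          have "isCont (fp j) (xs $ j)"
            using fpd[OF True] xV has_derivative_continuous by blast
          moreover have "(\<lambda>k. ys k $ j) \<longlonglongrightarrow> xs $ j" using H by (auto intro: tendsto_vec_nth)
          ultimately have "(\<lambda>k. fp j (ys k $ j)) \<longlonglongrightarrow> fp j (xs $ j)"
            by (rule isCont_tendsto_compose)
          then have "(\<lambda>k. fp j (ys k $ j) 1) \<longlonglongrightarrow> fp j (xs $ j) 1"
            by (rule bounded_linear.tendsto[OF blinfun.bounded_linear_left])
          moreover have "fp j (xs $ j) 1 = v $ j"
          proof -
            have "fp j (xs $ j) 1 \<in> D j" unfolding D_def by (rule dsub[OF True xV])
            moreover have "v $ j \<in> D j" using v subx by blast
            ultimately show ?thesis using c[OF True] by auto
          qed
          ultimately show ?thesis using True by simp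
        qed
      qed
    qed
  qed
  show ?thesis
    unfolding partly_smooth_def T M_def[symmetric] using part1 part2 part3 by blast
qed

end
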